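(* Assume $p$ is unbounded. Then for every fixed $n\ge 0$, as $r\to\infty$, $$\mathbf{P}\big[M_{[0,n]}=r\big]\sim (1+\mu+\cdots+\mu^n)\,p_r\quad\text{and}\quad \mathbf{P}\big[M_{[0,n]}>r\big]\sim(1+\mu+\cdots+\mu^n)\,\bar F(r),$$ where the first asymptotic equivalence is understood along the infinite set $\{r:p_r>0\}$.
   Context: Let $p=(p_0,p_1,p_2,\dots)$ be a probability distribution on the nonnegative integers with mean $\mu=\sum_k kp_k\in(0,\infty)$, and let $\tau(p)$ be a Galton–Watson tree with offspring distribution $p$: it starts with a single root at generation $0$, and every vertex independently has $k$ children with probability $p_k$. The out-degree of a vertex is its number of children. $M_n$ denotes the maximal out-degree among the vertices of generation $n$ (with $M_n=0$ if generation $n$ is empty), and $M_{[0,n]}=\max_{0\le i\le n}M_i$ (the local maximal out-degree over the first $n+1$ generations). $\bar F(r)=\sum_{k>r}p_k$. The distribution $p$ is called unbounded if the set $\{r:p_r>0\}$ is unbounded. *)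

theory Defs
  imports "HOL-Probability.Probability" "HOL-Library.Landau_Symbols"
begin

text \<open>Ulam--Harris construction of a Galton--Watson tree: every potential vertex
  u (a finite word of child indices, the root being the empty word) carries an
  independent number of children omega u with law p.  The Galton--Watson tree is
  the set of words u such that each letter is smaller than the number of children
  of the corresponding ancestor.\<close>

definition GW :: "nat pmf \<Rightarrow> (nat list \<Rightarrow> nat) measure" where
  "GW p = PiM UNIV (\<lambda>_. measure_pmf p)"

definition in_tree :: "(nat list \<Rightarrow> nat) \<Rightarrow> nat list \<Rightarrow> bool" where
  "in_tree \<omega> u \<longleftrightarrow> (\<forall>j < length u. u ! j < \<omega> (take j u))"

definition generation :: "(nat list \<Rightarrow> nat) \<Rightarrow> nat \<Rightarrow> nat list set" where
  "generation \<omega> k = {u. length u = k \<and> in_tree \<omega> u}"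

definition maxdeg :: "(nat list \<Rightarrow> nat) \<Rightarrow> nat \<Rightarrow> nat" where
  "maxdeg \<omega> k = (if generation \<omega> k = {} then 0 else Max (\<omega> ` generation \<omega> k))"

definition maxdeg_upto :: "(nat list \<Rightarrow> nat) \<Rightarrow> nat \<Rightarrow> nat" where
  "maxdeg_upto \<omega> n = Max ((\<lambda>i. maxdeg \<omega> i) ` {..n})"

end

theory Submission
  imports Defs
begin

definition shift :: "nat \<Rightarrow> (nat list \<Rightarrow> nat) \<Rightarrow> (nat list \<Rightarrow> nat)" where
  "shift i \<omega> = (\<lambda>u. \<omega> (i # u))"

lemma in_tree_Nil[simp]: "in_tree \<omega> []"
  by (simp add: in_tree_def)

lemma in_tree_Cons: "in_tree \<omega> (i # u) \<longleftrightarrow> i < \<omega> [] \<and> in_tree (shift i \<omega>) u"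
proof -
  have "in_tree \<omega> (i # u) \<longleftrightarrow> (\<forall>j < Suc (length u). (i#u) ! j < \<omega> (take j (i#u)))"
    by (simp add: in_tree_def)
  also have "\<dots> \<longleftrightarrow> i < \<omega> [] \<and> (\<forall>j < length u. u ! j < \<omega> (i # take j u))"
    by (auto simp: less_Suc_eq_0_disj) 
  finally show ?thesis by (simp add: in_tree_def shift_def)
qed

lemma generation_0: "generation \<omega> 0 = {[]}"
  by (auto simp: generation_def)

lemma generation_Suc: "generation \<omega> (Suc k) = (\<Union>i<\<omega> []. Cons i ` generation (shift i \<omega>) k)"
  apply (auto simp: generation_def in_tree_Cons length_Suc_conv)
  done

lemma finite_generation: "finite (generation \<omega> k)"
  by (induction k arbitrary: \<omega>) (auto simp: generation_0 generation_Suc)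

definition good :: "(nat list \<Rightarrow> nat) \<Rightarrow> nat \<Rightarrow> nat \<Rightarrow> bool" where
  "good \<omega> n r \<longleftrightarrow> (\<forall>u. length u \<le> n \<and> in_tree \<omega> u \<longrightarrow> \<omega> u \<le> r)"

lemma maxdeg_le: "maxdeg \<omega> i \<le> r \<longleftrightarrow> (\<forall>u\<in>generation \<omega> i. \<omega> u \<le> r)"
  using finite_generation[of \<omega> i] by (auto simp: maxdeg_def)

lemma maxdeg_upto_le: "maxdeg_upto \<omega> n \<le> r \<longleftrightarrow> good \<omega> n r"
  by (auto simp: maxdeg_upto_def maxdeg_le good_def generation_def)

lemma good_0: "good \<omega> 0 r \<longleftrightarrow> \<omega> [] \<le> r"
  by (auto simp: good_def)

lemma good_Suc: "good \<omega> (Suc n) r \<longleftrightarrow> \<omega> [] \<le> r \<and> (\<forall>i<\<omega> []. good (shift i \<omega>) n r)"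
proof
  assume g: "good \<omega> (Suc n) r"
  show "\<omega> [] \<le> r \<and> (\<forall>i<\<omega> []. good (shift i \<omega>) n r)"
  proof (intro conjI allI impI)
    show "\<omega> [] \<le> r" using g by (auto simp: good_def)
    fix i assume "i < \<omega> []"
    then show "good (shift i \<omega>) n r" using g unfolding good_def
      by (metis Suc_le_mono in_tree_Cons length_Cons shift_def)
  qed
next
  assume h: "\<omega> [] \<le> r \<and> (\<forall>i<\<omega> []. good (shift i \<omega>) n r)"
  show "good \<omega> (Suc n) r" unfolding good_def
  proof (intro allI impI)
    fix u assume u: "length u \<le> Suc n \<and> in_tree \<omega> u"
    show "\<omega> u \<le> r"
    proof (cases u)
      case Nil then show ?thesis using h by simp
    next
      case (Cons i v)
      then show ?thesis using h u unfolding good_def by (auto simp: in_tree_Cons shift_def)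
    qed
  qed
qed

lemma good_mono: "good \<omega> n r \<Longrightarrow> r \<le> s \<Longrightarrow> good \<omega> n s"
  by (auto simp: good_def intro: le_trans)


lemma space_GW: "space (GW p) = UNIV"
  by (simp add: GW_def space_PiM)

lemma sets_measure_pmf_UNIV: "A \<in> sets (measure_pmf p)"
  by simp

lemma shift_measurable: "shift i \<in> measurable (GW p) (GW p)"
  unfolding GW_def shift_def
  by (rule measurable_PiM_single') (auto intro: measurable_component_singleton)

lemma comp_measurable: "(\<lambda>\<omega>. \<omega> u) \<in> measurable (GW p) (measure_pmf p)"
  unfolding GW_def by (rule measurable_component_singleton) simp

lemma pred_coord: "{\<omega> \<in> space (GW p). P (\<omega> u)} \<in> sets (GW p)"
proof -
  have "{\<omega> \<in> space (GW p). P (\<omega> u)} = (\<lambda>\<omega>. \<omega> u) -` {x. P x} \<inter> space (GW p)" by auto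
  also have "\<dots> \<in> sets (GW p)" by (rule measurable_sets[OF comp_measurable]) simp
  finally show ?thesis .
qed

lemma UNIV_sets_GW: "UNIV \<in> sets (GW p)"
  using sets.top[of "GW p"] by (simp add: space_GW)

definition Q where "Q p n r = {\<omega> \<in> space (GW p). good \<omega> n r}"

lemma Q_sets: "Q p n r \<in> sets (GW p)"
proof (induction n)
  case 0
  then show ?case using pred_coord[where p=p and P="\<lambda>x. x \<le> r" and u="[]"] by (simp add: Q_def good_0)
next
  case (Suc n)
  have eq: "Q p (Suc n) r = (\<Union>k\<in>{..r}. {\<omega> \<in> space (GW p). \<omega> [] = k} \<inter>
          (space (GW p) \<inter> (\<Inter>i\<in>{..<k}. shift i -` Q p n r \<inter> space (GW p))))"
    by (auto simp: Q_def good_Suc space_GW)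
  have m: "space (GW p) \<inter> (\<Inter>i\<in>{..<k}. shift i -` Q p n r \<inter> space (GW p)) \<in> sets (GW p)" for k
  proof (cases "k = 0")
    case True then show ?thesis by simp
  next
    case False then show ?thesis
      using measurable_sets[OF shift_measurable Suc]
      by (intro sets.Int sets.finite_INT) (auto simp: space_GW UNIV_sets_GW)
  qed
  show ?case unfolding eq
    using pred_coord[where p=p and P="\<lambda>x. x = k" and u="[]" for k]
    apply (intro sets.finite_UN ballI)
     apply simp
    apply (rule sets.Int)
     apply assumption
    apply (rule m)
    done
qed


lemma GW_prob_space: "prob_space (GW p)"
  unfolding GW_def by (rule prob_space_PiM) (rule prob_space_measure_pmf)

lemma shift_distr: "distr (GW p) (GW p) (shift i) = GW p"
proof -
  have "distr (PiM UNIV (\<lambda>_::nat list. measure_pmf p)) (PiM UNIV (\<lambda>n::nat list. (\<lambda>_. measure_pmf p) (Cons i n)))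
          (\<lambda>\<omega>. \<lambda>n\<in>UNIV. \<omega> (Cons i n)) = PiM UNIV (\<lambda>n. (\<lambda>_. measure_pmf p) (Cons i n))"
    by (rule distr_PiM_reindex) (auto intro: prob_space_measure_pmf)
  moreover have "(\<lambda>\<omega>. \<lambda>n\<in>UNIV. \<omega> (Cons i n)) = shift i"
    by (auto simp: shift_def fun_eq_iff)
  ultimately show ?thesis by (simp add: GW_def)
qed

lemma measure_shift: "S \<in> sets (GW p) \<Longrightarrow> measure (GW p) (shift i -` S \<inter> space (GW p)) = measure (GW p) S"
  using measure_distr[OF shift_measurable, of S p i] shift_distr[of p i] by simp

lemma measure_root: "measure (GW p) {\<omega> \<in> space (GW p). \<omega> [] \<in> A} = measure_pmf.prob p A"
proof -
  interpret product_prob_space "\<lambda>_::nat list. measure_pmf p" UNIV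
    by unfold_locales
  have "emeasure (GW p) {\<omega> \<in> space (GW p). \<omega> [] \<in> A} = emeasure (measure_pmf p) A"
    unfolding GW_def by (rule emeasure_PiM_Collect_single) auto
  then show ?thesis by (simp add: measure_def)
qed

lemma indep_coords: "prob_space.indep_vars (GW p) (\<lambda>_. measure_pmf p) (\<lambda>u \<omega>. \<omega> u) UNIV"
proof -
  interpret prob_space "GW p" by (rule GW_prob_space)
  show ?thesis
  proof (subst indep_vars_iff_distr_eq_PiM)
    show "\<And>i. random_variable (measure_pmf p) (\<lambda>\<omega>. \<omega> i)" by (rule comp_measurable)
    have "distr (GW p) (Pi\<^sub>M UNIV (\<lambda>i. measure_pmf p)) (\<lambda>x. \<lambda>i\<in>UNIV. x i) = GW p"
    proof -
      have "(\<lambda>x::nat list \<Rightarrow> nat. \<lambda>i\<in>UNIV. x i) = (\<lambda>x. x)" by (auto simp: restrict_def fun_eq_iff)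
      then show ?thesis by (simp add: GW_def distr_id2)
    qed
    also have "\<dots> = Pi\<^sub>M UNIV (\<lambda>i. distr (GW p) (measure_pmf p) (\<lambda>\<omega>. \<omega> i))"
      unfolding GW_def
      by (intro PiM_cong refl distr_PiM_component[symmetric]) (auto intro: prob_space_measure_pmf)
    finally show "distr (GW p) (Pi\<^sub>M UNIV (\<lambda>i. measure_pmf p)) (\<lambda>x. \<lambda>i\<in>UNIV. x i) =
        Pi\<^sub>M UNIV (\<lambda>i. distr (GW p) (measure_pmf p) (\<lambda>\<omega>. \<omega> i))" .
  qed simp
qed


lemma root_event:
  assumes S: "S \<in> sets (GW p)"
  shows "measure (GW p) {\<omega> \<in> space (GW p). \<omega> [] = k \<and> (\<forall>i<k. shift i \<omega> \<in> S)} = pmf p k * measure (GW p) S ^ k"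
proof -
  interpret prob_space "GW p" by (rule GW_prob_space)
  define M where "M = (\<lambda>_::nat list. measure_pmf p)"
  define K where "K j = (case j of None \<Rightarrow> {[]} | Some i \<Rightarrow> range (Cons i))" for j :: "nat option"
  have ind: "indep_vars (\<lambda>j. PiM (K j) M) (\<lambda>j \<omega>. restrict (\<lambda>u. \<omega> u) (K j)) UNIV"
    unfolding M_def
    by (rule indep_vars_restrict[OF indep_coords]) (auto simp: K_def disjoint_family_on_def split: option.splits)
  define A where "A j = (case j of None \<Rightarrow> {f \<in> space (PiM (K None) M). f [] = k}
       | Some i \<Rightarrow> {f \<in> space (PiM (K (Some i)) M). (\<lambda>u. f (i#u)) \<in> S})" for j
  define J where "J = insert None (Some ` {..<k})"
  have A_sets: "A j \<in> sets (PiM (K j) M)" for j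
  proof (cases j)
    case None
    have "A j = (\<lambda>f. f []) -` {k} \<inter> space (PiM (K None) M)"
      using None by (auto simp: A_def)
    also have "\<dots> \<in> sets (PiM (K None) M)"
      by (rule measurable_sets[OF measurable_component_singleton]) (auto simp: K_def M_def)
    finally show ?thesis using None by simp
  next
    case (Some i)
    have m: "(\<lambda>f u. f (i#u)) \<in> measurable (PiM (K (Some i)) M) (GW p)"
      unfolding GW_def
      by (rule measurable_PiM_single') (auto simp: K_def M_def intro!: measurable_component_singleton)
    have "A j = (\<lambda>f u. f (i#u)) -` S \<inter> space (PiM (K (Some i)) M)"
      using Some by (auto simp: A_def)
    also have "\<dots> \<in> sets (PiM (K (Some i)) M)"
      by (rule measurable_sets[OF m S])
    finally show ?thesis using Some by simp
  qed
  have rs: "restrict \<omega> (K j) \<in> space (PiM (K j) M)" for \<omega> j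
    by (auto simp: space_PiM M_def)
  have pre: "(\<lambda>\<omega>. restrict (\<lambda>u. \<omega> u) (K j)) -` A j \<inter> space (GW p) =
      (case j of None \<Rightarrow> {\<omega> \<in> space (GW p). \<omega> [] \<in> {k}} | Some i \<Rightarrow> shift i -` S \<inter> space (GW p))" for j
  proof (cases j)
    case None
    then show ?thesis using rs[of _ None] by (auto simp: A_def K_def)
  next
    case (Some i)
    have eq: "(\<lambda>u. restrict \<omega> (K (Some i)) (i # u)) = shift i \<omega>" for \<omega>
      by (auto simp: K_def shift_def fun_eq_iff)
    show ?thesis using Some rs[of _ "Some i"] by (auto simp: A_def eq[unfolded restrict_def])
  qed
  have r0: "prob {\<omega> \<in> space (GW p). \<omega> [] = k} = pmf p k"
    using measure_root[of p "{k}"] by (simp add: measure_pmf_single)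
  have "{\<omega> \<in> space (GW p). \<omega> [] = k \<and> (\<forall>i<k. shift i \<omega> \<in> S)} =
      (\<Inter>j\<in>J. (\<lambda>\<omega>. restrict (\<lambda>u. \<omega> u) (K j)) -` A j \<inter> space (GW p))"
    unfolding pre by (auto simp: J_def)
  then have "prob {\<omega> \<in> space (GW p). \<omega> [] = k \<and> (\<forall>i<k. shift i \<omega> \<in> S)} =
      (\<Prod>j\<in>J. prob ((\<lambda>\<omega>. restrict (\<lambda>u. \<omega> u) (K j)) -` A j \<inter> space (GW p)))"
    using indep_varsD[OF ind, of J A] A_sets by (auto simp: J_def)
  also have "\<dots> = (\<Prod>j\<in>J. (case j of None \<Rightarrow> pmf p k | Some i \<Rightarrow> prob S))"
    unfolding pre
    by (intro prod.cong refl) (auto split: option.splits simp: measure_root measure_shift S r0)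
  also have "\<dots> = pmf p k * prob S ^ k"
    unfolding J_def by (subst prod.insert) (auto simp: prod.reindex)
  finally show ?thesis .
qed


lemma E_sets:
  assumes S: "S \<in> sets (GW p)"
  shows "{\<omega> \<in> space (GW p). \<omega> [] = k \<and> (\<forall>i<k. shift i \<omega> \<in> S)} \<in> sets (GW p)"
proof -
  have eq: "{\<omega> \<in> space (GW p). \<omega> [] = k \<and> (\<forall>i<k. shift i \<omega> \<in> S)} = {\<omega> \<in> space (GW p). \<omega> [] = k} \<inter>
          (space (GW p) \<inter> (\<Inter>i\<in>{..<k}. shift i -` S \<inter> space (GW p)))"
    by (auto simp: space_GW)
  have m: "space (GW p) \<inter> (\<Inter>i\<in>{..<k}. shift i -` S \<inter> space (GW p)) \<in> sets (GW p)"
  proof (cases "k = 0")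
    case True then show ?thesis by simp
  next
    case False then show ?thesis
      using measurable_sets[OF shift_measurable S]
      by (intro sets.Int sets.finite_INT) (auto simp: space_GW UNIV_sets_GW)
  qed
  show ?thesis unfolding eq
    using pred_coord[where p=p and P="\<lambda>x. x = k" and u="[]"] m by (rule sets.Int)
qed

lemma root_le:
  assumes S: "S \<in> sets (GW p)"
  shows "measure (GW p) {\<omega> \<in> space (GW p). \<omega> [] \<le> r \<and> (\<forall>i<\<omega> []. shift i \<omega> \<in> S)} =
     (\<Sum>k\<le>r. pmf p k * measure (GW p) S ^ k)"
proof -
  interpret prob_space "GW p" by (rule GW_prob_space)
  have "{\<omega> \<in> space (GW p). \<omega> [] \<le> r \<and> (\<forall>i<\<omega> []. shift i \<omega> \<in> S)} =
      (\<Union>k\<in>{..r}. {\<omega> \<in> space (GW p). \<omega> [] = k \<and> (\<forall>i<k. shift i \<omega> \<in> S)})"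
    by auto
  also have "prob \<dots> = (\<Sum>k\<le>r. prob {\<omega> \<in> space (GW p). \<omega> [] = k \<and> (\<forall>i<k. shift i \<omega> \<in> S)})"
    using E_sets[OF S] by (intro finite_measure_finite_Union) (auto simp: disjoint_family_on_def)
  also have "\<dots> = (\<Sum>k\<le>r. pmf p k * measure (GW p) S ^ k)"
    using root_event[OF S] by simp
  finally show ?thesis .
qed

definition q where "q p n r = measure (GW p) (Q p n r)"

lemma q_0: "q p 0 r = (\<Sum>k\<le>r. pmf p k)"
proof -
  interpret prob_space "GW p" by (rule GW_prob_space)
  have "Q p 0 r = {\<omega> \<in> space (GW p). \<omega> [] \<le> r \<and> (\<forall>i<\<omega> []. shift i \<omega> \<in> space (GW p))}"
    by (auto simp: Q_def good_0 space_GW)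
  then show ?thesis using root_le[of "space (GW p)" p r] by (simp add: q_def prob_space)
qed

lemma q_Suc: "q p (Suc n) r = (\<Sum>k\<le>r. pmf p k * q p n r ^ k)"
proof -
  have "Q p (Suc n) r = {\<omega> \<in> space (GW p). \<omega> [] \<le> r \<and> (\<forall>i<\<omega> []. shift i \<omega> \<in> Q p n r)}"
    by (auto simp: Q_def good_Suc space_GW)
  then show ?thesis using root_le[OF Q_sets[of p n r], of r] by (simp add: q_def)
qed

lemma q_bounds: "0 \<le> q p n r" "q p n r \<le> 1"
  using prob_space.prob_le_1[OF GW_prob_space] by (auto simp: q_def)

lemma Q_mono: "r \<le> s \<Longrightarrow> Q p n r \<subseteq> Q p n s"
  by (auto simp: Q_def intro: good_mono)

lemma q_mono: "r \<le> s \<Longrightarrow> q p n r \<le> q p n s"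
  unfolding q_def
  by (intro finite_measure.finite_measure_mono[OF prob_space.finite_measure[OF GW_prob_space]] Q_mono Q_sets)

lemma measure_gt: "measure (GW p) {\<omega> \<in> space (GW p). maxdeg_upto \<omega> n > r} = 1 - q p n r"
proof -
  interpret prob_space "GW p" by (rule GW_prob_space)
  have "{\<omega> \<in> space (GW p). maxdeg_upto \<omega> n > r} = space (GW p) - Q p n r"
    by (auto simp: Q_def maxdeg_upto_le[symmetric])
  then show ?thesis using prob_compl[OF Q_sets] by (simp add: q_def)
qed

lemma measure_eq: "r \<ge> 1 \<Longrightarrow> measure (GW p) {\<omega> \<in> space (GW p). maxdeg_upto \<omega> n = r} = q p n r - q p n (r - 1)"
proof -
  interpret prob_space "GW p" by (rule GW_prob_space)
  assume r: "r \<ge> 1"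
  have "{\<omega> \<in> space (GW p). maxdeg_upto \<omega> n = r} = Q p n r - Q p n (r - 1)"
    using r by (auto simp: Q_def maxdeg_upto_le[symmetric])
  then show ?thesis using finite_measure_Diff[OF Q_sets Q_sets Q_mono[of "r - 1" r]] by (simp add: q_def)
qed


lemma pow_upper: fixes b :: real assumes "0 \<le> b" "b \<le> 1"
  shows "1 - (1 - b) ^ k \<le> real k * b"
  using Bernoulli_inequality[of "-b" k] assms by simp

lemma pow_lower: fixes b :: real assumes "0 \<le> b" "b \<le> 1"
  shows "(1 - b) ^ k \<le> 1 - real k * b + (real k)^2 * b^2"
proof (induction k)
  case 0 then show ?case by simp
next
  case (Suc k)
  have "(1 - b) ^ Suc k = (1 - b) * (1 - b) ^ k" by simp
  also have "\<dots> \<le> (1 - b) * (1 - real k * b + (real k)^2 * b^2)"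
    using Suc assms by (intro mult_left_mono) auto
  also have "\<dots> = 1 - real (Suc k) * b + (real k + (real k)^2) * b^2 - (real k)^2 * b^3"
    by (simp add: algebra_simps power2_eq_square power3_eq_cube)
  also have "\<dots> \<le> 1 - real (Suc k) * b + (real (Suc k))^2 * b^2"
  proof -
    have "(real k + (real k)^2) * b^2 \<le> (real (Suc k))^2 * b^2"
      by (intro mult_right_mono) (auto simp: power2_eq_square algebra_simps)
    moreover have "0 \<le> (real k)^2 * b^3" using assms by simp
    ultimately show ?thesis by linarith
  qed
  finally show ?case .
qed

lemma powdiff_upper: fixes x y :: real assumes "0 \<le> y" "y \<le> x" "x \<le> 1"
  shows "x ^ k - y ^ k \<le> real k * (x - y)"
proof (induction k)
  case 0 then show ?case by simp
next
  case (Suc k)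
  have "x ^ Suc k - y ^ Suc k = x * (x ^ k - y ^ k) + y ^ k * (x - y)" by (simp add: algebra_simps)
  also have "\<dots> \<le> 1 * (real k * (x - y)) + 1 * (x - y)"
  proof (intro add_mono mult_mono)
    show "y ^ k \<le> 1" using assms by (simp add: power_le_one)
    show "0 \<le> x ^ k - y ^ k" using assms by (simp add: power_mono)
  qed (use Suc assms in auto)
  finally show ?case by (simp add: algebra_simps)
qed

lemma powdiff_lower0: fixes x y :: real assumes "0 \<le> y" "y \<le> x" "x \<le> 1"
  shows "real k * y ^ (k - 1) * (x - y) \<le> x ^ k - y ^ k"
proof (induction k)
  case 0 then show ?case by simp
next
  case (Suc k)
  have "x ^ Suc k - y ^ Suc k = x * (x ^ k - y ^ k) + y ^ k * (x - y)" by (simp add: algebra_simps)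
  also have "\<dots> \<ge> y * (real k * y ^ (k - 1) * (x - y)) + y ^ k * (x - y)"
  proof -
    have "y * (real k * y ^ (k - 1) * (x - y)) \<le> y * (x ^ k - y ^ k)"
      using Suc assms by (intro mult_left_mono) auto
    also have "\<dots> \<le> x * (x ^ k - y ^ k)"
      using assms by (intro mult_right_mono) (auto simp: power_mono)
    finally show ?thesis by simp
  qed
  moreover have "y * (real k * y ^ (k - 1) * (x - y)) + y ^ k * (x - y) = real (Suc k) * y ^ k * (x - y)"
    by (cases k) (auto simp: algebra_simps)
  ultimately show ?case by simp
qed

lemma powdiff_lower: fixes x y :: real assumes "0 \<le> y" "y \<le> x" "x \<le> 1"
  shows "real k * (1 - real k * (1 - y)) * (x - y) \<le> x ^ k - y ^ k"
proof -
  have "1 - real k * (1 - y) \<le> y ^ (k - 1)"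
  proof (cases k)
    case 0 then show ?thesis using assms by simp
  next
    case (Suc j)
    have "1 + real j * (y - 1) \<le> (1 + (y - 1)) ^ j"
      by (rule Bernoulli_inequality) (use assms in simp)
    then show ?thesis using Suc assms by (auto simp: algebra_simps)
  qed
  then have "real k * (1 - real k * (1 - y)) * (x - y) \<le> real k * y ^ (k - 1) * (x - y)"
    using assms by (intro mult_right_mono mult_left_mono) auto
  also have "\<dots> \<le> x ^ k - y ^ k" by (rule powdiff_lower0[OF assms])
  finally show ?thesis .
qed


locale gwp =
  fixes p :: "nat pmf"
  assumes int: "integrable (measure_pmf p) real"
    and unb: "infinite {r. pmf p r > 0}"
begin

definition mu where "mu = measure_pmf.expectation p real"
definition T where "T r = measure_pmf.prob p {r<..}"
definition m where "m r = (\<Sum>k\<le>r. real k * pmf p k)"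

lemma P_sums: "pmf p sums 1"
proof -
  have "pmf p sums integral\<^sup>L (count_space UNIV) (pmf p)"
    by (rule sums_integral_count_space_nat[OF integrable_pmf])
  then show ?thesis by (simp add: integral_pmf)
qed

lemma mu_sums: "(\<lambda>k. real k * pmf p k) sums mu"
proof -
  have i: "integrable (density (count_space UNIV) (pmf p)) real"
    using int by (simp add: measure_pmf_eq_density)
  have i2: "integrable (count_space UNIV) (\<lambda>x. pmf p x *\<^sub>R real x)"
    using i by (subst (asm) integrable_density) auto
  have "mu = integral\<^sup>L (density (count_space UNIV) (pmf p)) real"
    by (simp add: mu_def measure_pmf_eq_density)
  also have "\<dots> = integral\<^sup>L (count_space UNIV) (\<lambda>x. pmf p x *\<^sub>R real x)"
    by (rule integral_density) auto
  finally have "(\<lambda>x. pmf p x *\<^sub>R real x) sums mu"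
    using sums_integral_count_space_nat[OF i2] by simp
  then show ?thesis by (simp add: mult.commute)
qed

lemma T_eq: "T r = 1 - (\<Sum>k\<le>r. pmf p k)"
proof -
  have "{r<..} = space (measure_pmf p) - {..r}" by auto
  then have "T r = 1 - measure_pmf.prob p {..r}"
    unfolding T_def using measure_pmf.prob_compl[of "{..r}" p] by simp
  then show ?thesis by (simp add: measure_measure_pmf_finite)
qed

lemma T_pos: "T r > 0"
proof -
  obtain k where k: "k > r" "pmf p k > 0"
    using unb unfolding infinite_nat_iff_unbounded by auto
  have "pmf p k \<le> T r"
    unfolding T_def measure_pmf_single[symmetric]
    using k by (intro measure_pmf.finite_measure_mono) auto
  then show ?thesis using k by simp
qed

lemma T_tail: "T r = (\<Sum>j. pmf p (j + Suc r))"
proof -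
  have "1 = (\<Sum>j. pmf p (j + Suc r)) + (\<Sum>i<Suc r. pmf p i)"
    using suminf_split_initial_segment[OF sums_summable[OF P_sums], of "Suc r"] P_sums
    by (simp add: sums_iff)
  then show ?thesis by (simp add: T_eq lessThan_Suc_atMost)
qed

lemma m_tail: "mu - m r = (\<Sum>j. real (j + Suc r) * pmf p (j + Suc r))"
proof -
  have "mu = (\<Sum>j. real (j + Suc r) * pmf p (j + Suc r)) + (\<Sum>i<Suc r. real i * pmf p i)"
    using suminf_split_initial_segment[OF sums_summable[OF mu_sums], of "Suc r"] mu_sums
    by (simp add: sums_iff)
  then show ?thesis by (simp add: m_def lessThan_Suc_atMost)
qed

lemma m_le: "m r \<le> mu"
proof -
  have "0 \<le> (\<Sum>j. real (j + Suc r) * pmf p (j + Suc r))"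
    by (intro suminf_nonneg summable_ignore_initial_segment[OF sums_summable[OF mu_sums, unfolded]]) auto
  then show ?thesis using m_tail[of r] by simp
qed

lemma m_nonneg: "0 \<le> m r"
  by (auto simp: m_def intro: sum_nonneg)

lemma mu_nonneg: "0 \<le> mu"
  using m_nonneg m_le order_trans by blast

lemma m_lim: "m \<longlonglongrightarrow> mu"
proof -
  have "(\<lambda>n. \<Sum>k<n. real k * pmf p k) \<longlonglongrightarrow> mu" using mu_sums by (simp add: sums_def)
  then show ?thesis unfolding m_def by (simp add: LIMSEQ_lessThan_iff_atMost)
qed

lemma rT_le: "real r * T r \<le> mu - m r"
proof -
  have s1: "summable (\<lambda>j. pmf p (j + Suc r))"
    by (rule summable_ignore_initial_segment[OF sums_summable[OF P_sums]])
  have s2: "summable (\<lambda>j. real (j + Suc r) * pmf p (j + Suc r))"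
    using summable_ignore_initial_segment[OF sums_summable[OF mu_sums], of "Suc r"] by simp
  have "real r * T r = (\<Sum>j. real r * pmf p (j + Suc r))"
    unfolding T_tail using suminf_mult[OF s1, of "real r"] by simp
  also have "\<dots> \<le> (\<Sum>j. real (j + Suc r) * pmf p (j + Suc r))"
    by (intro suminf_le s2 summable_mult s1 mult_right_mono) auto
  finally show ?thesis using m_tail by simp
qed

lemma rT_lim: "(\<lambda>r. real r * T r) \<longlonglongrightarrow> 0"
proof (rule real_tendsto_sandwich)
  show "\<forall>\<^sub>F r in sequentially. 0 \<le> real r * T r" using T_pos by (intro always_eventually allI) (simp add: less_imp_le)
  show "\<forall>\<^sub>F r in sequentially. real r * T r \<le> mu - m r" using rT_le by auto
  show "(\<lambda>r. 0) \<longlonglongrightarrow> (0::real)" by simp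
  show "(\<lambda>r. mu - m r) \<longlonglongrightarrow> 0" using tendsto_diff[OF tendsto_const[of mu] m_lim] by simp
qed

lemma T_lim: "T \<longlonglongrightarrow> 0"
proof -
  have "(\<lambda>n. \<Sum>k<n. pmf p k) \<longlonglongrightarrow> 1" using P_sums by (simp add: sums_def)
  then have "(\<lambda>n. \<Sum>k\<le>n. pmf p k) \<longlonglongrightarrow> 1" by (simp add: LIMSEQ_lessThan_iff_atMost)
  then show ?thesis unfolding T_eq using tendsto_diff[OF tendsto_const[of 1]] by fastforce
qed

lemma sq_le: "(\<Sum>k\<le>r. (real k)^2 * pmf p k) \<le> real r * m r"
  unfolding m_def sum_distrib_left
  by (intro sum_mono) (auto simp: power2_eq_square mult.assoc intro!: mult_right_mono)

end

context gwp begin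

definition S where "S n = (\<Sum>i\<le>n. mu ^ i)"

lemma S_Suc: "S (Suc n) = 1 + S n * mu"
proof -
  have "S (Suc n) = mu ^ 0 + (\<Sum>i\<le>n. mu ^ Suc i)" unfolding S_def by (rule sum.atMost_Suc_shift)
  moreover have "(\<Sum>i\<le>n. mu ^ Suc i) = mu * S n" by (simp add: S_def sum_distrib_left)
  ultimately show ?thesis by (simp add: mult.commute)
qed

lemma S_pos: "S n > 0"
proof -
  have "1 \<le> S n" unfolding S_def
    using sum_mono2[of "{..n}" "{0}" "\<lambda>i. mu ^ i"] mu_nonneg by simp
  then show ?thesis by simp
qed

lemma a_bounds: "0 \<le> 1 - q p n r" "1 - q p n r \<le> 1"
  using q_bounds[of p n r] by auto

lemma A_lim: "((\<lambda>r. (1 - q p n r) / T r) \<longlongrightarrow> S n) sequentially"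
proof (induction n)
  case 0
  have "(\<lambda>r. (1 - q p 0 r) / T r) = (\<lambda>r. 1)"
    using T_pos by (auto simp: q_0 T_eq fun_eq_iff less_imp_neq[symmetric])
  then show ?case by (simp add: S_def)
next
  case (Suc n)
  define b where "b r = 1 - q p n r" for r
  define R where "R r = b r / T r" for r
  have R: "R \<longlonglongrightarrow> S n"
  proof -
    have "R = (\<lambda>r. (1 - q p n r) / T r)" by (simp add: fun_eq_iff R_def b_def)
    then show ?thesis using Suc by simp
  qed
  have b01: "0 \<le> b r" "b r \<le> 1" for r using a_bounds by (auto simp: b_def)
  define X where "X r = (\<Sum>k\<le>r. pmf p k * (1 - (1 - b r) ^ k))" for r
  have id: "1 - q p (Suc n) r = T r + X r" for r
  proof -
    have "q p (Suc n) r = (\<Sum>k\<le>r. pmf p k * (1 - b r) ^ k)" by (simp add: q_Suc b_def)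
    moreover have "X r = (\<Sum>k\<le>r. pmf p k) - (\<Sum>k\<le>r. pmf p k * (1 - b r) ^ k)"
      by (simp add: X_def right_diff_distrib sum_subtractf)
    ultimately show ?thesis by (simp add: T_eq)
  qed
  have Xup: "X r \<le> b r * m r" for r
  proof -
    have "X r \<le> (\<Sum>k\<le>r. pmf p k * (real k * b r))"
      unfolding X_def by (intro sum_mono mult_left_mono pow_upper b01) auto
    also have "\<dots> = b r * m r" by (simp add: m_def sum_distrib_left algebra_simps)
    finally show ?thesis .
  qed
  have Xlo: "b r * m r - (b r)^2 * real r * mu \<le> X r" for r
  proof -
    have "(\<Sum>k\<le>r. pmf p k * (real k * b r - (real k)^2 * (b r)^2)) \<le> X r"
      unfolding X_def
    proof (intro sum_mono mult_left_mono)
      fix k show "real k * b r - (real k)\<^sup>2 * (b r)\<^sup>2 \<le> 1 - (1 - b r) ^ k"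
        using pow_lower[OF b01(1)[of r] b01(2)[of r], of k] by linarith
    qed auto
    moreover have "(\<Sum>k\<le>r. pmf p k * (real k * b r - (real k)^2 * (b r)^2))
        = b r * m r - (b r)^2 * (\<Sum>k\<le>r. (real k)^2 * pmf p k)"
      by (simp add: m_def sum_distrib_left sum_subtractf algebra_simps)
    moreover have "(b r)^2 * (\<Sum>k\<le>r. (real k)^2 * pmf p k) \<le> (b r)^2 * (real r * mu)"
      using sq_le[of r] mult_left_mono[OF m_le[of r], of "real r"]
      by (intro mult_left_mono) auto
    ultimately show ?thesis by (simp add: algebra_simps)
  qed
  have ratio: "(1 - q p (Suc n) r) / T r = 1 + X r / T r" for r
    using T_pos[of r] by (simp add: id field_simps)
  show ?case
  proof (rule real_tendsto_sandwich)
    show "\<forall>\<^sub>F r in sequentially. 1 + R r * m r - R r * (R r * (real r * T r)) * mu \<le> (1 - q p (Suc n) r) / T r"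
    proof (intro always_eventually allI)
      fix r
      have "(b r * m r - (b r)^2 * real r * mu) / T r \<le> X r / T r"
        using Xlo T_pos[of r] by (intro divide_right_mono) auto
      moreover have "(b r * m r - (b r)^2 * real r * mu) / T r = R r * m r - R r * (R r * (real r * T r)) * mu"
        using T_pos[of r] by (simp add: R_def field_simps power2_eq_square)
      ultimately show "1 + R r * m r - R r * (R r * (real r * T r)) * mu \<le> (1 - q p (Suc n) r) / T r"
        by (simp add: ratio)
    qed
    show "\<forall>\<^sub>F r in sequentially. (1 - q p (Suc n) r) / T r \<le> 1 + R r * m r"
    proof (intro always_eventually allI)
      fix r
      have "X r / T r \<le> (b r * m r) / T r"
        using Xup T_pos[of r] by (intro divide_right_mono) auto
      then show "(1 - q p (Suc n) r) / T r \<le> 1 + R r * m r" by (simp add: ratio R_def)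
    qed
    show "(\<lambda>r. 1 + R r * m r - R r * (R r * (real r * T r)) * mu) \<longlonglongrightarrow> S (Suc n)"
    proof -
      have l1: "(\<lambda>r. R r * (R r * (real r * T r)) * mu) \<longlonglongrightarrow> S n * (S n * 0) * mu"
        by (intro tendsto_mult R rT_lim tendsto_const)
      have l2: "(\<lambda>r. 1 + R r * m r) \<longlonglongrightarrow> 1 + S n * mu"
        by (intro tendsto_add tendsto_mult R m_lim tendsto_const)
      show ?thesis using tendsto_diff[OF l2 l1] by (simp add: S_Suc)
    qed
    show "(\<lambda>r. 1 + R r * m r) \<longlonglongrightarrow> S (Suc n)"
      using R m_lim by (auto simp: S_Suc intro!: tendsto_eq_intros)
  qed
qed

end

context gwp begin

lemma ra_lim: "(\<lambda>r. real r * (1 - q p n r)) \<longlonglongrightarrow> 0"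
proof -
  have "(\<lambda>r. real r * (1 - q p n r)) = (\<lambda>r. ((1 - q p n r) / T r) * (real r * T r))"
    using T_pos by (auto simp: fun_eq_iff less_imp_neq[symmetric])
  moreover have "(\<lambda>r. ((1 - q p n r) / T r) * (real r * T r)) \<longlonglongrightarrow> S n * 0"
    by (intro tendsto_mult A_lim rT_lim)
  ultimately show ?thesis by simp
qed

lemma a_lim: "(\<lambda>r. 1 - q p n r) \<longlonglongrightarrow> 0"
proof -
  have "(\<lambda>r. 1 - q p n r) = (\<lambda>r. ((1 - q p n r) / T r) * T r)"
    using T_pos by (auto simp: fun_eq_iff less_imp_neq[symmetric])
  moreover have "(\<lambda>r. ((1 - q p n r) / T r) * T r) \<longlonglongrightarrow> S n * 0"
    by (intro tendsto_mult A_lim T_lim)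
  ultimately show ?thesis by simp
qed

lemma ra1_lim: "(\<lambda>r. real r * (1 - q p n (r - 1))) \<longlonglongrightarrow> 0"
proof -
  have "(\<lambda>r. real (Suc r) * (1 - q p n (Suc r - 1))) = (\<lambda>r. real r * (1 - q p n r) + (1 - q p n r))"
    by (auto simp: fun_eq_iff algebra_simps)
  moreover have "(\<lambda>r. real r * (1 - q p n r) + (1 - q p n r)) \<longlonglongrightarrow> 0 + 0"
    by (intro tendsto_add ra_lim a_lim)
  ultimately have "(\<lambda>r. real (Suc r) * (1 - q p n (Suc r - 1))) \<longlonglongrightarrow> 0" by simp
  then show ?thesis by (rule filterlim_sequentially_Suc[THEN iffD1])
qed

lemma m1_lim: "(\<lambda>r. m (r - 1)) \<longlonglongrightarrow> mu"
  using filterlim_sequentially_Suc[of "\<lambda>r. m (r - 1)"] m_lim by simp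

abbreviation F where "F \<equiv> inf sequentially (principal {r. 0 < pmf p r})"

lemma evF: "eventually (\<lambda>r. 1 \<le> r \<and> 0 < pmf p r) F"
proof -
  have "eventually (\<lambda>r. 1 \<le> r) F"
    by (rule filter_leD[OF inf_le1]) (rule eventually_ge_at_top)
  moreover have "eventually (\<lambda>r. 0 < pmf p r) F"
    by (simp add: eventually_inf_principal)
  ultimately show ?thesis by (rule eventually_conj)
qed

lemma toF: "(f \<longlongrightarrow> l) sequentially \<Longrightarrow> (f \<longlongrightarrow> l) F"
  by (rule tendsto_mono[OF inf_le1])

lemma D_lim: "((\<lambda>r. (q p n r - q p n (r - 1)) / pmf p r) \<longlongrightarrow> S n) F"
proof (induction n)
  case 0
  have "eventually (\<lambda>r. (q p 0 r - q p 0 (r - 1)) / pmf p r = 1) F"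
    using evF
  proof eventually_elim
    case (elim r)
    then obtain s where s: "r = Suc s" by (cases r) auto
    show ?case using elim by (simp add: s q_0)
  qed
  then have "((\<lambda>r. (q p 0 r - q p 0 (r - 1)) / pmf p r) \<longlongrightarrow> 1) F"
    by (rule tendsto_eventually)
  then show ?case by (simp add: S_def)
next
  case (Suc n)
  define D where "D r = (q p n r - q p n (r - 1)) / pmf p r" for r
  have D: "(D \<longlongrightarrow> S n) F"
  proof -
    have "D = (\<lambda>r. (q p n r - q p n (r - 1)) / pmf p r)" by (simp add: fun_eq_iff D_def)
    then show ?thesis using Suc by simp
  qed
  have bounds: "1 - real r * (1 - q p n r) + D r * (m (r - 1) - real r * (1 - q p n (r - 1)) * mu)
      \<le> (q p (Suc n) r - q p (Suc n) (r - 1)) / pmf p r \<and>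
      (q p (Suc n) r - q p (Suc n) (r - 1)) / pmf p r \<le> 1 + D r * m (r - 1)"
    if r: "1 \<le> r" "0 < pmf p r" for r
  proof -
    obtain s where s: "r = Suc s" using r by (cases r) auto
    define x where "x = q p n r"
    define y where "y = q p n s"
    define d where "d = x - y"
    have xy: "0 \<le> y" "y \<le> x" "x \<le> 1"
      using q_bounds[of p n] q_mono[of s r p n] by (auto simp: x_def y_def s)
    define Y where "Y = (\<Sum>k\<le>s. pmf p k * (x ^ k - y ^ k))"
    have id: "q p (Suc n) r - q p (Suc n) (r - 1) = pmf p r * x ^ r + Y"
      by (simp add: q_Suc s Y_def x_def y_def right_diff_distrib sum_subtractf)
    have Yup: "Y \<le> d * m s"
    proof -
      have "Y \<le> (\<Sum>k\<le>s. pmf p k * (real k * (x - y)))"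
        unfolding Y_def by (intro sum_mono mult_left_mono powdiff_upper xy) auto
      also have "\<dots> = d * m s" by (simp add: m_def d_def sum_distrib_left algebra_simps)
      finally show ?thesis .
    qed
    have Ylo: "d * (m s - real r * (1 - y) * mu) \<le> Y"
    proof -
      have "(\<Sum>k\<le>s. pmf p k * (real k * (1 - real k * (1 - y)) * (x - y))) \<le> Y"
        unfolding Y_def by (intro sum_mono mult_left_mono powdiff_lower xy) auto
      moreover have "(\<Sum>k\<le>s. pmf p k * (real k * (1 - real k * (1 - y)) * (x - y)))
          = d * m s - d * (1 - y) * (\<Sum>k\<le>s. (real k)^2 * pmf p k)"
      proof -
        have "(\<Sum>k\<le>s. pmf p k * (real k * (1 - real k * (1 - y)) * (x - y)))
           = (\<Sum>k\<le>s. d * (real k * pmf p k) - d * (1 - y) * ((real k)^2 * pmf p k))"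
          by (intro sum.cong) (simp_all add: d_def algebra_simps power2_eq_square)
        also have "\<dots> = d * m s - d * (1 - y) * (\<Sum>k\<le>s. (real k)^2 * pmf p k)"
          by (simp add: m_def sum_subtractf sum_distrib_left)
        finally show ?thesis .
      qed
      moreover have "d * (1 - y) * (\<Sum>k\<le>s. (real k)^2 * pmf p k) \<le> d * (1 - y) * (real r * mu)"
      proof (intro mult_left_mono)
        have "real s * m s \<le> real r * mu"
          using m_le[of s] m_nonneg[of s] mu_nonneg s by (intro mult_mono) auto
        then show "(\<Sum>k\<le>s. (real k)\<^sup>2 * pmf p k) \<le> real r * mu" using sq_le[of s] by linarith
      qed (use xy in \<open>auto simp: d_def\<close>)
      ultimately show ?thesis by (simp add: algebra_simps)
    qed
    have xr: "1 - real r * (1 - x) \<le> x ^ r" "x ^ r \<le> 1"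
      using pow_upper[of "1 - x" r] xy by (auto simp: power_le_one)
    have Dr: "D r = d / pmf p r" by (simp add: D_def d_def x_def y_def s)
    have "(q p (Suc n) r - q p (Suc n) (r - 1)) / pmf p r = (pmf p r * x ^ r + Y) / pmf p r"
      by (simp only: id)
    also have "\<dots> = x ^ r + Y / pmf p r"
      using r by (simp add: field_simps)
    finally have "(q p (Suc n) r - q p (Suc n) (r - 1)) / pmf p r = x ^ r + Y / pmf p r" .
    moreover have "Y / pmf p r \<le> D r * m s"
      using Yup r by (simp add: Dr divide_right_mono[OF Yup, of "pmf p r", simplified] mult.commute mult.left_commute)
    moreover have "D r * (m s - real r * (1 - y) * mu) \<le> Y / pmf p r"
      using Ylo r by (simp add: Dr divide_right_mono[OF Ylo, of "pmf p r", simplified])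
    ultimately show ?thesis using xr by (simp add: s x_def y_def)
  qed
  show ?case
  proof (rule real_tendsto_sandwich)
    show "\<forall>\<^sub>F r in F. 1 - real r * (1 - q p n r) + D r * (m (r - 1) - real r * (1 - q p n (r - 1)) * mu)
        \<le> (q p (Suc n) r - q p (Suc n) (r - 1)) / pmf p r"
      using evF by eventually_elim (use bounds in blast)
    show "\<forall>\<^sub>F r in F. (q p (Suc n) r - q p (Suc n) (r - 1)) / pmf p r \<le> 1 + D r * m (r - 1)"
      using evF by eventually_elim (use bounds in blast)
    show "((\<lambda>r. 1 + D r * m (r - 1)) \<longlongrightarrow> S (Suc n)) F"
      using tendsto_add[OF tendsto_const[of 1] tendsto_mult[OF D toF[OF m1_lim]]]
      by (simp add: S_Suc)
    show "((\<lambda>r. 1 - real r * (1 - q p n r) + D r * (m (r - 1) - real r * (1 - q p n (r - 1)) * mu))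
        \<longlongrightarrow> S (Suc n)) F"
      using tendsto_add[OF tendsto_diff[OF tendsto_const[of 1] toF[OF ra_lim[of n]]]
          tendsto_mult[OF D tendsto_diff[OF toF[OF m1_lim] tendsto_mult[OF toF[OF ra1_lim[of n]] tendsto_const[of mu]]]]]
      by (simp add: S_Suc)
  qed
qed

end
theorem theorem2p3:
  fixes p :: "nat pmf" and n :: nat
  assumes mean_finite: "integrable (measure_pmf p) real"
    and mean_pos: "measure_pmf.expectation p real > 0"
    and unbounded: "infinite {r. pmf p r > 0}"
  shows "((\<lambda>r. measure (GW p) {\<omega> \<in> space (GW p). maxdeg_upto \<omega> n = r})
           \<sim>[inf at_top (principal {r. pmf p r > 0})]
         (\<lambda>r. (\<Sum>i\<le>n. (measure_pmf.expectation p real) ^ i) * pmf p r)) \<and>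
         ((\<lambda>r. measure (GW p) {\<omega> \<in> space (GW p). maxdeg_upto \<omega> n > r})
           \<sim>[at_top]
         (\<lambda>r. (\<Sum>i\<le>n. (measure_pmf.expectation p real) ^ i) * measure_pmf.prob p {r<..}))"
proof -
  interpret gwp p using mean_finite unbounded by unfold_locales
  have SS: "(\<Sum>i\<le>n. (measure_pmf.expectation p real) ^ i) = S n"
    by (simp add: S_def mu_def)
  have Sn: "S n \<noteq> 0" using S_pos[of n] by simp
  have part1: "((\<lambda>r. measure (GW p) {\<omega> \<in> space (GW p). maxdeg_upto \<omega> n = r} / (S n * pmf p r)) \<longlongrightarrow> 1) F"
  proof (rule Lim_transform_eventually)
    show "((\<lambda>r. ((q p n r - q p n (r - 1)) / pmf p r) / S n) \<longlongrightarrow> 1) F"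
      using tendsto_divide[OF D_lim[of n] tendsto_const[of "S n"]] Sn by simp
    show "\<forall>\<^sub>F r in F. (q p n r - q p n (r - 1)) / pmf p r / S n =
        measure (GW p) {\<omega> \<in> space (GW p). maxdeg_upto \<omega> n = r} / (S n * pmf p r)"
      using evF by eventually_elim (simp add: measure_eq)
  qed
  have part2: "((\<lambda>r. measure (GW p) {\<omega> \<in> space (GW p). maxdeg_upto \<omega> n > r} / (S n * T r)) \<longlongrightarrow> 1) sequentially"
  proof -
    have "((\<lambda>r. ((1 - q p n r) / T r) / S n) \<longlongrightarrow> 1) sequentially"
      using tendsto_divide[OF A_lim[of n] tendsto_const[of "S n"]] Sn by simp
    then show ?thesis by (simp add: measure_gt mult.commute)
  qed
  show ?thesis
    unfolding SS
    using asymp_equivI'[OF part1] asymp_equivI'[OF part2] by (simp add: T_def)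
qed

end
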